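(* Let $(A,\gamma)$ be a quasiordered set. If $\mathrm{hsdim}(A,\gamma)=1$, then $\gamma$ is a half-space, and $\dim\bigl(A/(\gamma\cap\gamma^{-1}),r_\gamma\bigr)=1$ if $\gamma$ has no empty box with more than one element, while $\dim\bigl(A/(\gamma\cap\gamma^{-1}),r_\gamma\bigr)=2$ if $\gamma$ has an empty box with more than one element. If $\mathrm{hsdim}(A,\gamma)\ge2$, then $\dim\bigl(A/(\gamma\cap\gamma^{-1}),r_\gamma\bigr)=\mathrm{hsdim}(A,\gamma)$.
   Context: A quasiorder on $A$ is a reflexive and transitive relation; $\Delta_A=\{(a,a)\mid a\in A\}$. A quasiorder $\alpha$ on $A$ is a half-space if there is a quasiorder $\beta$ on $A$ with $\alpha\cup\beta=A\times A$ and $\alpha\cap\beta=\Delta_A$; then $\beta=\Delta_A\cup((A\times A)\setminus\alpha)$. The boxes of a half-space $\alpha$ are the classes of the equivalence relation $\varepsilon=(\alpha\cap\alpha^{-1})\cup(\beta\cap\beta^{-1})$; a box $B$ is empty if $\alpha\cap(B\times B)=\Delta_B$ and full if $|B|>1$ and $B\times B\subseteq\alpha$ (every box is either full or empty). A half-space realizer of a quasiorder $\gamma$ on $A$ is a set $\{\alpha_i\mid i\in I\}$ of half-spaces on $A$ with $\bigcap_{i\in I}\alpha_i=\gamma$; $\mathrm{hsdim}(A,\gamma)$ is the minimum cardinality of a half-space realizer. $r_\gamma$ is the induced partial order on $A/(\gamma\cap\gamma^{-1})$: $([a],[b])\in r_\gamma$ iff $(a,b)\in\gamma$. $\dim$ denotes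 order dimension: the least cardinality of a set of linear extensions whose intersection is the given partial order. *)

theory Defs
  imports Main
begin

text \<open>Quasiorders on A are the library's preorder_on A (reflexive on A, transitive, contained in A x A).\<close>

definition half_space :: "'a set \<Rightarrow> 'a rel \<Rightarrow> bool" where
  "half_space A \<alpha> \<longleftrightarrow> preorder_on A \<alpha> \<and>
     (\<exists>\<beta>. preorder_on A \<beta> \<and> \<alpha> \<union> \<beta> = A \<times> A \<and> \<alpha> \<inter> \<beta> = Id_on A)"

definition hs_compl :: "'a set \<Rightarrow> 'a rel \<Rightarrow> 'a rel" where
  "hs_compl A \<alpha> = Id_on A \<union> ((A \<times> A) - \<alpha>)"

definition box_equiv :: "'a set \<Rightarrow> 'a rel \<Rightarrow> 'a rel" where
  "box_equiv A \<alpha> = (\<alpha> \<inter> \<alpha>\<inverse>) \<union> (hs_compl A \<alpha> \<inter> (hs_compl A \<alpha>)\<inverse>)"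

definition boxes :: "'a set \<Rightarrow> 'a rel \<Rightarrow> 'a set set" where
  "boxes A \<alpha> = A // box_equiv A \<alpha>"

definition empty_box :: "'a rel \<Rightarrow> 'a set \<Rightarrow> bool" where
  "empty_box \<alpha> B \<longleftrightarrow> \<alpha> \<inter> (B \<times> B) = Id_on B"

text \<open>Half-space realizers. The intersection of a family of relations on A is taken
  inside A x A (so the empty family has intersection A x A).\<close>
definition hs_realizer :: "'a set \<Rightarrow> 'a rel \<Rightarrow> 'a rel set \<Rightarrow> bool" where
  "hs_realizer A \<gamma> R \<longleftrightarrow> (\<forall>\<alpha>\<in>R. half_space A \<alpha>) \<and> (A \<times> A) \<inter> \<Inter>R = \<gamma>"

definition hsdim :: "'a set \<Rightarrow> 'a rel \<Rightarrow> 'a rel rel" where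
  "hsdim A \<gamma> = card_of (SOME R. hs_realizer A \<gamma> R \<and>
      (\<forall>R'. hs_realizer A \<gamma> R' \<longrightarrow> (card_of R, card_of R') \<in> ordLeq))"

definition lin_realizer :: "'b set \<Rightarrow> 'b rel \<Rightarrow> 'b rel set \<Rightarrow> bool" where
  "lin_realizer X r L \<longleftrightarrow> (\<forall>l\<in>L. linear_order_on X l \<and> r \<subseteq> l) \<and> (X \<times> X) \<inter> \<Inter>L = r"

definition odim :: "'b set \<Rightarrow> 'b rel \<Rightarrow> 'b rel rel" where
  "odim X r = card_of (SOME L. lin_realizer X r L \<and>
      (\<forall>L'. lin_realizer X r L' \<longrightarrow> (card_of L, card_of L') \<in> ordLeq))"

definition qclasses :: "'a set \<Rightarrow> 'a rel \<Rightarrow> 'a set set" where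
  "qclasses A \<gamma> = A // (\<gamma> \<inter> \<gamma>\<inverse>)"

definition r_of :: "'a rel \<Rightarrow> 'a set rel" where
  "r_of \<gamma> = {((\<gamma> \<inter> \<gamma>\<inverse>) `` {a}, (\<gamma> \<inter> \<gamma>\<inverse>) `` {b}) | a b. (a, b) \<in> \<gamma>}"

end

theory Submission
  imports Defs
begin


lemma ext_pair:
  assumes po: "partial_order_on X r" and u: "u \<in> X" and v: "v \<in> X"
    and nuv: "(u,v) \<notin> r"
  shows "partial_order_on X (r \<union> {(a,b). (a,v) \<in> r \<and> (u,b) \<in> r})"
    and "(v,u) \<in> r \<union> {(a,b). (a,v) \<in> r \<and> (u,b) \<in> r}"
proof -
  have sub: "r \<subseteq> X \<times> X" and rf: "refl_on X r" and tr: "trans r" and an: "antisym r"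
    using po by (auto simp: partial_order_on_def preorder_on_def)
  show "(v,u) \<in> r \<union> {(a,b). (a,v) \<in> r \<and> (u,b) \<in> r}"
    using rf u v by (auto simp: refl_on_def)
  show "partial_order_on X (r \<union> {(a,b). (a,v) \<in> r \<and> (u,b) \<in> r})"
    unfolding partial_order_on_def preorder_on_def
  proof (intro conjI)
    show "r \<union> {(a,b). (a,v) \<in> r \<and> (u,b) \<in> r} \<subseteq> X \<times> X" using sub by auto
    show "refl_on X (r \<union> {(a,b). (a,v) \<in> r \<and> (u,b) \<in> r})" using rf by (auto simp: refl_on_def)
    show "trans (r \<union> {(a,b). (a,v) \<in> r \<and> (u,b) \<in> r})"
      using tr nuv unfolding trans_def by blast
    show "antisym (r \<union> {(a,b). (a,v) \<in> r \<and> (u,b) \<in> r})"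
      using tr nuv an unfolding trans_def antisym_def by blast
  qed
qed

lemma szpilrajn:
  assumes po: "partial_order_on X r"
  shows "\<exists>l. linear_order_on X l \<and> r \<subseteq> l"
proof -
  let ?S = "{m. partial_order_on X m \<and> r \<subseteq> m}"
  have "\<exists>M\<in>?S. \<forall>Y\<in>?S. M \<subseteq> Y \<longrightarrow> Y = M"
  proof (rule Zorn_Lemma2, intro ballI)
    fix C assume C: "C \<in> chains ?S"
    show "\<exists>U\<in>?S. \<forall>Y\<in>C. Y \<subseteq> U"
    proof (cases "C = {}")
      case True thus ?thesis using po by auto
    next
      case False
      have CS: "C \<subseteq> ?S" and ch: "\<forall>a\<in>C. \<forall>b\<in>C. a \<subseteq> b \<or> b \<subseteq> a"
        using C by (auto simp: chains_def chain_subset_def)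
      have "partial_order_on X (\<Union>C)"
        unfolding partial_order_on_def preorder_on_def
      proof (intro conjI)
        show "\<Union>C \<subseteq> X \<times> X" using CS by (auto simp: partial_order_on_def preorder_on_def)
        show "refl_on X (\<Union>C)" unfolding refl_on_def
        proof
          fix x assume "x \<in> X"
          obtain c where "c \<in> C" using False by auto
          hence "(x,x) \<in> c" using CS \<open>x \<in> X\<close> by (auto simp: partial_order_on_def preorder_on_def refl_on_def)
          thus "(x,x) \<in> \<Union>C" using \<open>c \<in> C\<close> by auto
        qed
        show "trans (\<Union>C)" unfolding trans_def
        proof (intro allI impI)
          fix x y z assume "(x,y) \<in> \<Union>C" "(y,z) \<in> \<Union>C"
          then obtain a b where a: "a \<in> C" "(x,y) \<in> a" and b: "b \<in> C" "(y,z) \<in> b" by auto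
          show "(x,z) \<in> \<Union>C"
          proof (cases "a \<subseteq> b")
            case True
            hence "trans b" using CS b by (auto simp: partial_order_on_def preorder_on_def)
            thus ?thesis using True a b unfolding trans_def by blast
          next
            case False
            hence "b \<subseteq> a" using ch a b by blast
            moreover have "trans a" using CS a by (auto simp: partial_order_on_def preorder_on_def)
            ultimately show ?thesis using a b unfolding trans_def by blast
          qed
        qed
        show "antisym (\<Union>C)" unfolding antisym_def
        proof (intro allI impI)
          fix x y assume "(x,y) \<in> \<Union>C" "(y,x) \<in> \<Union>C"
          then obtain a b where a: "a \<in> C" "(x,y) \<in> a" and b: "b \<in> C" "(y,x) \<in> b" by auto
          show "x = y"
          proof (cases "a \<subseteq> b")
            case True
            hence "antisym b" using CS b by (auto simp: partial_order_on_def)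
            thus ?thesis using True a b unfolding antisym_def by blast
          next
            case False
            hence "b \<subseteq> a" using ch a b by blast
            moreover have "antisym a" using CS a by (auto simp: partial_order_on_def)
            ultimately show ?thesis using a b unfolding antisym_def by blast
          qed
        qed
      qed
      moreover have "r \<subseteq> \<Union>C" using False CS by auto
      ultimately show ?thesis by auto
    qed
  qed
  then obtain m where mS: "m \<in> ?S" and max0: "\<forall>Y\<in>?S. m \<subseteq> Y \<longrightarrow> Y = m" by (rule bexE)
  have m: "partial_order_on X m" "r \<subseteq> m" using mS by auto
  have max: "\<And>Y. Y \<in> ?S \<Longrightarrow> m \<subseteq> Y \<Longrightarrow> Y = m" using max0 by blast
  have "total_on X m"
    unfolding total_on_def
  proof (intro ballI impI)
    fix u v assume u: "u \<in> X" and v: "v \<in> X" and "u \<noteq> v"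
    show "(u,v) \<in> m \<or> (v,u) \<in> m"
    proof (rule ccontr)
      assume "\<not> ((u,v) \<in> m \<or> (v,u) \<in> m)"
      hence n: "(u,v) \<notin> m" "(v,u) \<notin> m" by auto
      let ?m = "m \<union> {(a,b). (a,v) \<in> m \<and> (u,b) \<in> m}"
      have "partial_order_on X ?m" "(v,u) \<in> ?m" using ext_pair[OF m(1) u v n(1)] by auto
      moreover have "?m \<in> ?S" using \<open>partial_order_on X ?m\<close> m(2) by auto
      moreover have "m \<subseteq> ?m" by (rule Un_upper1)
      ultimately have "?m = m" using max by blast
      have "(v,u) \<in> m" using \<open>?m = m\<close> \<open>(v,u) \<in> ?m\<close> by (rule subst)
      with n(2) show False by contradiction
    qed
  qed
  thus ?thesis using m by (auto simp: linear_order_on_def)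
qed

lemma szpilrajn_pair:
  assumes po: "partial_order_on X r" and u: "u \<in> X" and v: "v \<in> X" and nuv: "(u,v) \<notin> r"
  shows "\<exists>l. linear_order_on X l \<and> r \<subseteq> l \<and> (u,v) \<notin> l"
proof -
  let ?r = "r \<union> {(a,b). (a,v) \<in> r \<and> (u,b) \<in> r}"
  obtain l where l: "linear_order_on X l" "?r \<subseteq> l"
    using szpilrajn[OF ext_pair(1)[OF po u v nuv]] by blast
  have "(v,u) \<in> l" using l ext_pair(2)[OF po u v nuv] by auto
  moreover have "u \<noteq> v" using nuv po u by (auto simp: partial_order_on_def preorder_on_def refl_on_def)
  moreover have "antisym l" using l by (auto simp: linear_order_on_def partial_order_on_def)
  ultimately have "(u,v) \<notin> l" unfolding antisym_def by blast
  thus ?thesis using l by auto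
qed



definition tp :: "'a set \<Rightarrow> 'a rel \<Rightarrow> bool" where
  "tp A T \<longleftrightarrow> preorder_on A T \<and> total_on A T"

definition lexr :: "'a rel \<Rightarrow> 'a rel \<Rightarrow> 'a rel" where
  "lexr P Q = {(x,y). (x,y) \<in> P \<and> ((y,x) \<notin> P \<or> (x,y) \<in> Q)}"

lemma lexr_tp:
  assumes P: "tp A P"
  and Qrefl: "\<And>x. x \<in> A \<Longrightarrow> (x,x) \<in> Q"
  and Qtot: "\<And>x y. x \<in> A \<Longrightarrow> y \<in> A \<Longrightarrow> x \<noteq> y \<Longrightarrow> (x,y) \<in> P \<Longrightarrow> (y,x) \<in> P \<Longrightarrow> (x,y) \<in> Q \<or> (y,x) \<in> Q"
  and Qtrans: "\<And>x y z. x \<in> A \<Longrightarrow> y \<in> A \<Longrightarrow> z \<in> A \<Longrightarrow> x \<noteq> y \<Longrightarrow> y \<noteq> z \<Longrightarrow> (x,y) \<in> P \<Longrightarrow> (y,x) \<in> P \<Longrightarrow> (y,z) \<in> P \<Longrightarrow> (z,y) \<in> P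
      \<Longrightarrow> (x,y) \<in> Q \<Longrightarrow> (y,z) \<in> Q \<Longrightarrow> (x,z) \<in> Q"
  shows "tp A (lexr P Q)"
proof -
  have sub: "P \<subseteq> A \<times> A" and rf: "\<And>x. x \<in> A \<Longrightarrow> (x,x) \<in> P" and tr: "trans P"
    and tot: "total_on A P"
    using P by (auto simp: tp_def preorder_on_def refl_on_def)
  have "trans (lexr P Q)" unfolding trans_def
  proof (intro allI impI)
    fix x y z assume xy: "(x,y) \<in> lexr P Q" and yz: "(y,z) \<in> lexr P Q"
    have p1: "(x,y) \<in> P" and p2: "(y,z) \<in> P" using xy yz by (auto simp: lexr_def)
    hence p3: "(x,z) \<in> P" using tr unfolding trans_def by blast
    show "(x,z) \<in> lexr P Q"
    proof (cases "(z,x) \<in> P")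
      case False thus ?thesis using p3 by (auto simp: lexr_def)
    next
      case True
      have yx: "(y,x) \<in> P" using True p2 tr unfolding trans_def by blast
      have zy: "(z,y) \<in> P" using True p1 tr unfolding trans_def by blast
      have q1: "(x,y) \<in> Q" and q2: "(y,z) \<in> Q" using xy yz yx zy by (auto simp: lexr_def)
      have A: "x \<in> A" "y \<in> A" "z \<in> A" using p1 p2 sub by auto
      have "(x,z) \<in> Q"
      proof (cases "x = y")
        case True thus ?thesis using q2 by simp
      next
        case False
        show ?thesis
        proof (cases "y = z")
          case True thus ?thesis using q1 by simp
        next
          case False
          show ?thesis using Qtrans[OF A \<open>x \<noteq> y\<close> False p1 yx p2 zy q1 q2] .
        qed
      qed
      thus ?thesis using p3 by (auto simp: lexr_def)
    qed
  qed
  moreover have "lexr P Q \<subseteq> A \<times> A" using sub by (auto simp: lexr_def)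
  moreover have "refl_on A (lexr P Q)" using rf Qrefl by (auto simp: lexr_def refl_on_def)
  moreover have "total_on A (lexr P Q)" unfolding total_on_def
  proof (intro ballI impI)
    fix x y assume x: "x \<in> A" and y: "y \<in> A" and ne: "x \<noteq> y"
    show "(x,y) \<in> lexr P Q \<or> (y,x) \<in> lexr P Q"
      using tot x y ne Qtot[OF x y ne] unfolding total_on_def lexr_def by blast
  qed
  ultimately show ?thesis by (auto simp: tp_def preorder_on_def)
qed

lemma lexr_equiv: "(x,y) \<in> lexr P Q \<Longrightarrow> (y,x) \<in> lexr P Q \<Longrightarrow> (x,y) \<in> P \<and> (y,x) \<in> P \<and> (x,y) \<in> Q \<and> (y,x) \<in> Q"
  by (auto simp: lexr_def)

lemma tp_converse: "tp A P \<Longrightarrow> tp A (P\<inverse>)"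
  by (auto simp: tp_def total_on_def)

lemma tp_half_space: assumes "tp A T" shows "half_space A T"
proof -
  have T: "T \<subseteq> A \<times> A" "\<And>x. x \<in> A \<Longrightarrow> (x,x) \<in> T" "trans T" "total_on A T"
    using assms by (auto simp: tp_def preorder_on_def refl_on_def)
  let ?b = "Id_on A \<union> ((A \<times> A) - T)"
  have "preorder_on A ?b"
    unfolding preorder_on_def refl_on_def trans_def
  proof (intro conjI allI impI ballI)
    fix x y z assume xy: "(x,y) \<in> ?b" and yz: "(y,z) \<in> ?b"
    show "(x,z) \<in> ?b"
    proof (cases "x = y \<or> y = z")
      case True thus ?thesis using xy yz by auto
    next
      case False
      hence a: "(x,y) \<notin> T" "(y,z) \<notin> T" "x \<in> A" "y \<in> A" "z \<in> A" using xy yz by auto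
      hence "(y,x) \<in> T" "(z,y) \<in> T" using T(4) False unfolding total_on_def by blast+
      hence "(z,x) \<in> T" using T(3) unfolding trans_def by blast
      have "(x,z) \<notin> T"
      proof
        assume "(x,z) \<in> T"
        with \<open>(z,y) \<in> T\<close> have "(x,y) \<in> T" using T(3) unfolding trans_def by blast
        thus False using a by simp
      qed
      thus ?thesis using a by auto
    qed
  qed auto
  moreover have "T \<union> ?b = A \<times> A" using T by auto
  moreover have "T \<inter> ?b = Id_on A" using T by auto
  ultimately show ?thesis using assms unfolding half_space_def tp_def by blast
qed

lemma hs_prop:
  assumes "half_space A \<alpha>"
  shows "preorder_on A \<alpha>"
    and "\<And>x y z. x \<in> A \<Longrightarrow> y \<in> A \<Longrightarrow> z \<in> A \<Longrightarrow> (x,y) \<notin> \<alpha> \<Longrightarrow> (y,z) \<notin> \<alpha> \<Longrightarrow> x \<noteq> z \<Longrightarrow> (x,z) \<notin> \<alpha>"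
proof -
  show "preorder_on A \<alpha>" using assms by (simp add: half_space_def)
  obtain \<beta> where b: "preorder_on A \<beta>" "\<alpha> \<union> \<beta> = A \<times> A" "\<alpha> \<inter> \<beta> = Id_on A"
    using assms by (auto simp: half_space_def)
  fix x y z assume A: "x \<in> A" "y \<in> A" "z \<in> A" and n: "(x,y) \<notin> \<alpha>" "(y,z) \<notin> \<alpha>" "x \<noteq> z"
  have "(x,y) \<in> \<beta>" "(y,z) \<in> \<beta>" using A n b(2) by auto
  hence "(x,z) \<in> \<beta>" using b(1) unfolding preorder_on_def trans_def by blast
  show "(x,z) \<notin> \<alpha>"
  proof
    assume "(x,z) \<in> \<alpha>"
    with \<open>(x,z) \<in> \<beta>\<close> have "(x,z) \<in> Id_on A" using b(3) by blast
    thus False using n(3) by auto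
  qed
qed

lemma hs_compl_preorder:
  assumes "half_space A \<alpha>" shows "preorder_on A (hs_compl A \<alpha>)"
proof -
  have p: "preorder_on A \<alpha>" using hs_prop(1)[OF assms] .
  show ?thesis unfolding preorder_on_def hs_compl_def refl_on_def trans_def
  proof (intro conjI allI impI ballI)
    fix x y z assume xy: "(x,y) \<in> Id_on A \<union> (A \<times> A - \<alpha>)" and yz: "(y,z) \<in> Id_on A \<union> (A \<times> A - \<alpha>)"
    show "(x,z) \<in> Id_on A \<union> (A \<times> A - \<alpha>)"
    proof (cases "x = y \<or> y = z \<or> x = z")
      case True thus ?thesis using xy yz by auto
    next
      case False
      thus ?thesis using xy yz hs_prop(2)[OF assms, of x y z] by auto
    qed
  qed auto
qed

definition inc :: "'a rel \<Rightarrow> 'a \<Rightarrow> 'a \<Rightarrow> bool" where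
  "inc \<alpha> x y \<longleftrightarrow> (x,y) \<notin> \<alpha> \<and> (y,x) \<notin> \<alpha>"

definition boxo :: "'a set \<Rightarrow> 'a rel \<Rightarrow> 'a rel" where
  "boxo A \<alpha> = \<alpha> \<union> {(x,y). x \<in> A \<and> y \<in> A \<and> inc \<alpha> x y}"

lemma hs_N1:
  assumes "half_space A \<alpha>" "x \<in> A" "y \<in> A" "z \<in> A" "(x,y) \<in> \<alpha>" "(y,x) \<in> \<alpha>" "inc \<alpha> y z" "x \<noteq> y"
  shows False
proof -
  have t: "trans \<alpha>" using hs_prop(1)[OF assms(1)] by (simp add: preorder_on_def)
  have "(x,z) \<notin> \<alpha>" using assms(6,7) t unfolding inc_def trans_def by blast
  moreover have "(z,y) \<notin> \<alpha>" using assms(7) unfolding inc_def by blast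
  ultimately have "(x,y) \<notin> \<alpha>" using hs_prop(2)[OF assms(1), of x z y] assms by blast
  thus False using assms by simp
qed

lemma hs_N2:
  assumes "half_space A \<alpha>" "x \<in> A" "y \<in> A" "z \<in> A" "inc \<alpha> x y" "inc \<alpha> y z" "x \<noteq> z"
  shows "inc \<alpha> x z"
  using hs_prop(2)[OF assms(1), of x y z] hs_prop(2)[OF assms(1), of z y x] assms
  unfolding inc_def by blast

lemma boxo_tp:
  assumes hs: "half_space A \<alpha>" shows "tp A (boxo A \<alpha>)"
proof -
  have p: "\<alpha> \<subseteq> A \<times> A" "\<And>x. x \<in> A \<Longrightarrow> (x,x) \<in> \<alpha>" "trans \<alpha>"
    using hs_prop(1)[OF hs] by (auto simp: preorder_on_def refl_on_def)
  have "trans (boxo A \<alpha>)" unfolding trans_def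
  proof (intro allI impI)
    fix x y z assume xy: "(x,y) \<in> boxo A \<alpha>" and yz: "(y,z) \<in> boxo A \<alpha>"
    have A: "x \<in> A" "y \<in> A" "z \<in> A" using xy yz p(1) by (auto simp: boxo_def)
    show "(x,z) \<in> boxo A \<alpha>"
    proof (cases "(x,y) \<in> \<alpha>")
      case xa: True
      show ?thesis
      proof (cases "(y,z) \<in> \<alpha>")
        case True thus ?thesis using xa p(3) unfolding boxo_def trans_def by blast
      next
        case False
        hence "inc \<alpha> y z" using yz by (auto simp: boxo_def)
        thus ?thesis using xa p(3) A unfolding boxo_def trans_def inc_def by blast
      qed
    next
      case xn: False
      hence ixy: "inc \<alpha> x y" using xy by (auto simp: boxo_def)
      show ?thesis
      proof (cases "(y,z) \<in> \<alpha>")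
        case True thus ?thesis using ixy p(3) A unfolding boxo_def trans_def inc_def by blast
      next
        case False
        hence "inc \<alpha> y z" using yz by (auto simp: boxo_def)
        thus ?thesis using hs_N2[OF hs A ixy] p(2) A unfolding boxo_def by blast
      qed
    qed
  qed
  thus ?thesis using p unfolding tp_def preorder_on_def refl_on_def total_on_def boxo_def inc_def
    by blast
qed

lemma boxo_equiv:
  assumes "(x,y) \<in> boxo A \<alpha>" "(y,x) \<in> boxo A \<alpha>"
  shows "((x,y) \<in> \<alpha> \<and> (y,x) \<in> \<alpha>) \<or> inc \<alpha> x y"
  using assms by (auto simp: boxo_def inc_def)



definition piv :: "'i \<Rightarrow> 'i \<Rightarrow> 'i \<Rightarrow> 'i" where
  "piv p q i = (if i = p then q else p)"

definition Tt :: "('i \<Rightarrow> 'a rel) \<Rightarrow> 'a rel \<Rightarrow> 'i \<Rightarrow> 'i \<Rightarrow> 'i \<Rightarrow> 'a rel" where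
  "Tt \<alpha> M p q i = {(x,y). if (x,y) \<in> \<alpha> (piv p q i) \<and> (y,x) \<in> \<alpha> (piv p q i) then (y,x) \<in> M
      else (if i = p then (y,x) \<in> M else (x,y) \<in> M)}"

definition Kr :: "'a set \<Rightarrow> ('i \<Rightarrow> 'a rel) \<Rightarrow> 'a rel \<Rightarrow> 'i \<Rightarrow> 'i \<Rightarrow> 'i \<Rightarrow> 'a rel" where
  "Kr A \<alpha> M p q i = lexr ((boxo A (\<alpha> (piv p q i)))\<inverse>) (Tt \<alpha> M p q i)"

definition Qr :: "'a set \<Rightarrow> ('i \<Rightarrow> 'a rel) \<Rightarrow> 'a rel \<Rightarrow> 'i \<Rightarrow> 'i \<Rightarrow> 'i \<Rightarrow> 'a rel" where
  "Qr A \<alpha> M p q i = {(x,y). if (x,y) \<in> \<alpha> i \<and> (y,x) \<in> \<alpha> i then (x,y) \<in> M else (x,y) \<in> Kr A \<alpha> M p q i}"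

definition Lr :: "'a set \<Rightarrow> ('i \<Rightarrow> 'a rel) \<Rightarrow> 'a rel \<Rightarrow> 'i \<Rightarrow> 'i \<Rightarrow> 'i \<Rightarrow> 'a rel" where
  "Lr A \<alpha> M p q i = lexr (boxo A (\<alpha> i)) (Qr A \<alpha> M p q i)"

lemma Qr_eq: "(x,y) \<in> Qr A \<alpha> M p q i \<longleftrightarrow> (if (x,y) \<in> \<alpha> i \<and> (y,x) \<in> \<alpha> i then (x,y) \<in> M else (x,y) \<in> Kr A \<alpha> M p q i)"
  by (simp add: Qr_def)

lemma Tt_eq: "(x,y) \<in> Tt \<alpha> M p q i \<longleftrightarrow> (if (x,y) \<in> \<alpha> (piv p q i) \<and> (y,x) \<in> \<alpha> (piv p q i) then (y,x) \<in> M
      else (if i = p then (y,x) \<in> M else (x,y) \<in> M))"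
  by (simp add: Tt_def)

context
  fixes A :: "'a set" and \<gamma> :: "'a rel" and I :: "'i set" and \<alpha> :: "'i \<Rightarrow> 'a rel"
    and p q :: 'i and M :: "'a rel"
  assumes pI: "p \<in> I" and qI: "q \<in> I" and pq: "p \<noteq> q"
    and hs: "\<And>i. i \<in> I \<Longrightarrow> half_space A (\<alpha> i)"
    and ga: "\<And>i. i \<in> I \<Longrightarrow> \<gamma> \<subseteq> \<alpha> i"
    and gint: "\<And>x y. x \<in> A \<Longrightarrow> y \<in> A \<Longrightarrow> (\<forall>i\<in>I. (x,y) \<in> \<alpha> i) \<Longrightarrow> (x,y) \<in> \<gamma>"
    and M: "tp A M" and gM: "\<gamma> \<subseteq> M" and Mg: "\<And>x y. (x,y) \<in> M \<Longrightarrow> (y,x) \<in> M \<Longrightarrow> (x,y) \<in> \<gamma>"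
begin

lemma M_props: "M \<subseteq> A \<times> A" "\<And>x. x \<in> A \<Longrightarrow> (x,x) \<in> M" "trans M"
  "\<And>x y. x \<in> A \<Longrightarrow> y \<in> A \<Longrightarrow> x \<noteq> y \<Longrightarrow> (x,y) \<in> M \<or> (y,x) \<in> M"
  using M by (auto simp: tp_def preorder_on_def refl_on_def total_on_def)

lemma piv_I: "i \<in> I \<Longrightarrow> piv p q i \<in> I"
  using pI qI by (simp add: piv_def)

lemma al_props: assumes "i \<in> I"
  shows "\<alpha> i \<subseteq> A \<times> A" "\<And>x. x \<in> A \<Longrightarrow> (x,x) \<in> \<alpha> i" "trans (\<alpha> i)"
  using hs_prop(1)[OF hs[OF assms]] by (auto simp: preorder_on_def refl_on_def)

lemma Kr_tp: assumes i: "i \<in> I" shows "tp A (Kr A \<alpha> M p q i)"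
proof -
  let ?j = "piv p q i"
  have j: "?j \<in> I" using piv_I[OF i] .
  note hj = hs[OF j]
  note aj = al_props[OF j]
  show ?thesis unfolding Kr_def
  proof (rule lexr_tp)
    show "tp A ((boxo A (\<alpha> ?j))\<inverse>)" using tp_converse[OF boxo_tp[OF hj]] .
    fix x assume "x \<in> A" thus "(x,x) \<in> Tt \<alpha> M p q i"
      using aj(2) M_props(2) by (simp add: Tt_def)
  next
    fix x y assume x: "x \<in> A" and y: "y \<in> A" and "x \<noteq> y"
    thus "(x,y) \<in> Tt \<alpha> M p q i \<or> (y,x) \<in> Tt \<alpha> M p q i"
      using M_props(4)[OF x y] M_props(4)[OF y x] by (auto simp: Tt_def)
  next
    fix x y z assume A: "x \<in> A" "y \<in> A" "z \<in> A" and ne: "x \<noteq> y" "y \<noteq> z"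
      and e: "(x,y) \<in> (boxo A (\<alpha> ?j))\<inverse>" "(y,x) \<in> (boxo A (\<alpha> ?j))\<inverse>"
        "(y,z) \<in> (boxo A (\<alpha> ?j))\<inverse>" "(z,y) \<in> (boxo A (\<alpha> ?j))\<inverse>"
      and t: "(x,y) \<in> Tt \<alpha> M p q i" "(y,z) \<in> Tt \<alpha> M p q i"
    have e1: "((x,y) \<in> \<alpha> ?j \<and> (y,x) \<in> \<alpha> ?j) \<or> inc (\<alpha> ?j) x y"
      using boxo_equiv[of x y A "\<alpha> ?j"] e by auto
    have e2: "((y,z) \<in> \<alpha> ?j \<and> (z,y) \<in> \<alpha> ?j) \<or> inc (\<alpha> ?j) y z"
      using boxo_equiv[of y z A "\<alpha> ?j"] e by auto
    have Mt: "trans M" by (rule M_props(3))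
    show "(x,z) \<in> Tt \<alpha> M p q i"
    proof (cases "(x,y) \<in> \<alpha> ?j \<and> (y,x) \<in> \<alpha> ?j")
      case c1: True
      show ?thesis
      proof (cases "(y,z) \<in> \<alpha> ?j \<and> (z,y) \<in> \<alpha> ?j")
        case True
        hence "(x,z) \<in> \<alpha> ?j \<and> (z,x) \<in> \<alpha> ?j" using c1 aj(3) unfolding trans_def by blast
        thus ?thesis using t c1 True Mt unfolding Tt_def trans_def by auto
      next
        case False
        hence "inc (\<alpha> ?j) y z" using e2 by blast
        thus ?thesis using hs_N1[OF hj A c1[THEN conjunct1] c1[THEN conjunct2]] ne by blast
      qed
    next
      case c1: False
      hence i1: "inc (\<alpha> ?j) x y" using e1 by blast
      show ?thesis
      proof (cases "(y,z) \<in> \<alpha> ?j \<and> (z,y) \<in> \<alpha> ?j")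
        case True
        have "inc (\<alpha> ?j) y x" using i1 by (auto simp: inc_def)
        thus ?thesis using hs_N1[OF hj A(3) A(2) A(1) True[THEN conjunct2] True[THEN conjunct1]] ne by blast
      next
        case False
        hence i2: "inc (\<alpha> ?j) y z" using e2 by blast
        show ?thesis
        proof (cases "x = z")
          case True thus ?thesis using A aj(2) M_props(2) by (simp add: Tt_def)
        next
          case False
          have i3: "inc (\<alpha> ?j) x z" using hs_N2[OF hj A i1 i2 False] .
          have "\<not> ((x,y) \<in> \<alpha> ?j \<and> (y,x) \<in> \<alpha> ?j)" "\<not> ((y,z) \<in> \<alpha> ?j \<and> (z,y) \<in> \<alpha> ?j)"
            "\<not> ((x,z) \<in> \<alpha> ?j \<and> (z,x) \<in> \<alpha> ?j)" using i1 i2 i3 by (auto simp: inc_def)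
          note nn = this
          show ?thesis
          proof (cases "i = p")
            case True
            hence "(y,x) \<in> M" "(z,y) \<in> M" using t nn by (simp_all add: Tt_def)
            hence "(z,x) \<in> M" using Mt unfolding trans_def by blast
            thus ?thesis unfolding Tt_eq if_not_P[OF nn(3)] using True by simp
          next
            case False
            hence "(x,y) \<in> M" "(y,z) \<in> M" using t nn by (simp_all add: Tt_def)
            hence "(x,z) \<in> M" using Mt unfolding trans_def by blast
            thus ?thesis unfolding Tt_eq if_not_P[OF nn(3)] if_not_P[OF False] .
          qed
        qed
      qed
    qed
  qed
qed

lemma Lr_tp: assumes i: "i \<in> I" shows "tp A (Lr A \<alpha> M p q i)"
proof -
  note hi = hs[OF i]
  note ai = al_props[OF i]
  have K: "M \<subseteq> A \<times> A" "trans (Kr A \<alpha> M p q i)"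
    "\<And>x y. x \<in> A \<Longrightarrow> y \<in> A \<Longrightarrow> x \<noteq> y \<Longrightarrow> (x,y) \<in> Kr A \<alpha> M p q i \<or> (y,x) \<in> Kr A \<alpha> M p q i"
    using Kr_tp[OF i] M_props(1) by (auto simp: tp_def preorder_on_def total_on_def)
  show ?thesis unfolding Lr_def
  proof (rule lexr_tp)
    show "tp A (boxo A (\<alpha> i))" using boxo_tp[OF hi] .
    fix x assume "x \<in> A" thus "(x,x) \<in> Qr A \<alpha> M p q i"
      using ai(2) M_props(2) by (simp add: Qr_def)
  next
    fix x y assume x: "x \<in> A" and y: "y \<in> A" and "x \<noteq> y"
    thus "(x,y) \<in> Qr A \<alpha> M p q i \<or> (y,x) \<in> Qr A \<alpha> M p q i"
      using M_props(4)[OF x y] K(3)[OF x y] by (auto simp: Qr_def)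
  next
    fix x y z assume A: "x \<in> A" "y \<in> A" "z \<in> A" and ne: "x \<noteq> y" "y \<noteq> z"
      and e: "(x,y) \<in> boxo A (\<alpha> i)" "(y,x) \<in> boxo A (\<alpha> i)"
        "(y,z) \<in> boxo A (\<alpha> i)" "(z,y) \<in> boxo A (\<alpha> i)"
      and t: "(x,y) \<in> Qr A \<alpha> M p q i" "(y,z) \<in> Qr A \<alpha> M p q i"
    have e1: "((x,y) \<in> \<alpha> i \<and> (y,x) \<in> \<alpha> i) \<or> inc (\<alpha> i) x y"
      using boxo_equiv[of x y A "\<alpha> i"] e by auto
    have e2: "((y,z) \<in> \<alpha> i \<and> (z,y) \<in> \<alpha> i) \<or> inc (\<alpha> i) y z"
      using boxo_equiv[of y z A "\<alpha> i"] e by auto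
    have Mt: "trans M" by (rule M_props(3))
    show "(x,z) \<in> Qr A \<alpha> M p q i"
    proof (cases "(x,y) \<in> \<alpha> i \<and> (y,x) \<in> \<alpha> i")
      case c1: True
      show ?thesis
      proof (cases "(y,z) \<in> \<alpha> i \<and> (z,y) \<in> \<alpha> i")
        case True
        hence "(x,z) \<in> \<alpha> i \<and> (z,x) \<in> \<alpha> i" using c1 ai(3) unfolding trans_def by blast
        thus ?thesis using t c1 True Mt unfolding Qr_def trans_def by auto
      next
        case False
        hence "inc (\<alpha> i) y z" using e2 by blast
        thus ?thesis using hs_N1[OF hi A c1[THEN conjunct1] c1[THEN conjunct2]] ne by blast
      qed
    next
      case c1: False
      hence i1: "inc (\<alpha> i) x y" using e1 by blast
      show ?thesis
      proof (cases "(y,z) \<in> \<alpha> i \<and> (z,y) \<in> \<alpha> i")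
        case True
        have "inc (\<alpha> i) y x" using i1 by (auto simp: inc_def)
        thus ?thesis using hs_N1[OF hi A(3) A(2) A(1) True[THEN conjunct2] True[THEN conjunct1]] ne by blast
      next
        case False
        hence i2: "inc (\<alpha> i) y z" using e2 by blast
        show ?thesis
        proof (cases "x = z")
          case True thus ?thesis using A ai(2) M_props(2) by (simp add: Qr_def)
        next
          case False
          have i3: "inc (\<alpha> i) x z" using hs_N2[OF hi A i1 i2 False] .
          have "\<not> ((x,y) \<in> \<alpha> i \<and> (y,x) \<in> \<alpha> i)" "\<not> ((y,z) \<in> \<alpha> i \<and> (z,y) \<in> \<alpha> i)"
            "\<not> ((x,z) \<in> \<alpha> i \<and> (z,x) \<in> \<alpha> i)" using i1 i2 i3 by (auto simp: inc_def)
          hence "(x,y) \<in> Kr A \<alpha> M p q i" "(y,z) \<in> Kr A \<alpha> M p q i" using t by (simp_all add: Qr_def)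
          hence "(x,z) \<in> Kr A \<alpha> M p q i" using K(2) unfolding trans_def by blast
          thus ?thesis unfolding Qr_eq if_not_P[OF \<open>\<not> ((x,z) \<in> \<alpha> i \<and> (z,x) \<in> \<alpha> i)\<close>] .
        qed
      qed
    qed
  qed
qed

lemma g_Lr: assumes i: "i \<in> I" shows "\<gamma> \<subseteq> Lr A \<alpha> M p q i"
proof (rule subrelI)
  fix x y assume g: "(x,y) \<in> \<gamma>"
  hence a: "(x,y) \<in> \<alpha> i" using ga[OF i] by auto
  hence b: "(x,y) \<in> boxo A (\<alpha> i)" by (simp add: boxo_def)
  show "(x,y) \<in> Lr A \<alpha> M p q i"
  proof (cases "(y,x) \<in> boxo A (\<alpha> i)")
    case False thus ?thesis using b by (simp add: Lr_def lexr_def)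
  next
    case True
    hence "(y,x) \<in> \<alpha> i" using a by (auto simp: boxo_def inc_def)
    thus ?thesis using a b g gM by (auto simp: Lr_def lexr_def Qr_def)
  qed
qed

lemma Lr_g: assumes i: "i \<in> I" and xy: "(x,y) \<in> Lr A \<alpha> M p q i" and yx: "(y,x) \<in> Lr A \<alpha> M p q i"
  shows "(x,y) \<in> \<gamma>"
proof -
  have e: "(x,y) \<in> boxo A (\<alpha> i)" "(y,x) \<in> boxo A (\<alpha> i)"
    and qq: "(x,y) \<in> Qr A \<alpha> M p q i" "(y,x) \<in> Qr A \<alpha> M p q i"
    using lexr_equiv[OF xy[unfolded Lr_def] yx[unfolded Lr_def]] by auto
  show ?thesis
  proof (cases "(x,y) \<in> \<alpha> i \<and> (y,x) \<in> \<alpha> i")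
    case True
    thus ?thesis using qq Mg by (auto simp: Qr_def)
  next
    case False
    hence k: "(x,y) \<in> Kr A \<alpha> M p q i" "(y,x) \<in> Kr A \<alpha> M p q i" using qq by (auto simp: Qr_def)
    have "(x,y) \<in> Tt \<alpha> M p q i" "(y,x) \<in> Tt \<alpha> M p q i"
      using lexr_equiv[OF k(1)[unfolded Kr_def] k(2)[unfolded Kr_def]] by auto
    hence "(x,y) \<in> M \<and> (y,x) \<in> M" by (auto simp: Tt_def split: if_splits)
    thus ?thesis using Mg by blast
  qed
qed

lemma Lr_int:
  assumes x: "x \<in> A" and y: "y \<in> A" and all: "\<forall>i\<in>I. (x,y) \<in> Lr A \<alpha> M p q i"
  shows "(x,y) \<in> \<gamma>"
proof (rule ccontr)
  assume ng: "(x,y) \<notin> \<gamma>"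
  have nM: "\<not> ((x,y) \<in> M \<and> (y,x) \<in> M)" using ng Mg by blast
  have bx: "\<And>i. i \<in> I \<Longrightarrow> (x,y) \<in> boxo A (\<alpha> i)" using all by (auto simp: Lr_def lexr_def)
  have F1: "\<And>i. i \<in> I \<Longrightarrow> (x,y) \<in> \<alpha> i \<or> inc (\<alpha> i) x y"
    using bx by (auto simp: boxo_def)
  have H: "\<And>i. i \<in> I \<Longrightarrow> (x,y) \<in> \<alpha> i \<Longrightarrow> (y,x) \<in> \<alpha> i \<Longrightarrow> (x,y) \<in> M"
  proof -
    fix i assume i: "i \<in> I" and a: "(x,y) \<in> \<alpha> i" "(y,x) \<in> \<alpha> i"
    have "(y,x) \<in> boxo A (\<alpha> i)" using a by (simp add: boxo_def)
    hence "(x,y) \<in> Qr A \<alpha> M p q i" using all i by (auto simp: Lr_def lexr_def)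
    thus "(x,y) \<in> M" using a by (simp add: Qr_def)
  qed
  have G: "\<And>i. i \<in> I \<Longrightarrow> inc (\<alpha> i) x y \<Longrightarrow>
      (((x,y) \<in> \<alpha> (piv p q i) \<and> (y,x) \<in> \<alpha> (piv p q i)) \<longrightarrow> (y,x) \<in> M) \<and>
      (inc (\<alpha> (piv p q i)) x y \<longrightarrow> (if i = p then (y,x) \<in> M else (x,y) \<in> M))"
  proof -
    fix i assume i: "i \<in> I" and ic: "inc (\<alpha> i) x y"
    have "(y,x) \<in> boxo A (\<alpha> i)" using ic x y by (auto simp: boxo_def inc_def)
    hence "(x,y) \<in> Qr A \<alpha> M p q i" using all i by (auto simp: Lr_def lexr_def)
    hence k: "(x,y) \<in> Kr A \<alpha> M p q i" using ic by (auto simp: Qr_def inc_def)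
    have "(x,y) \<in> boxo A (\<alpha> (piv p q i))" using bx[OF piv_I[OF i]] .
    hence "(x,y) \<in> Tt \<alpha> M p q i" using k by (auto simp: Kr_def lexr_def)
    thus "(((x,y) \<in> \<alpha> (piv p q i) \<and> (y,x) \<in> \<alpha> (piv p q i)) \<longrightarrow> (y,x) \<in> M) \<and>
      (inc (\<alpha> (piv p q i)) x y \<longrightarrow> (if i = p then (y,x) \<in> M else (x,y) \<in> M))"
      by (auto simp: Tt_def inc_def)
  qed
  have G2: "\<And>i. i \<in> I \<Longrightarrow> inc (\<alpha> i) x y \<Longrightarrow>
      ((x,y) \<in> \<alpha> (piv p q i) \<and> (y,x) \<in> \<alpha> (piv p q i)) \<or> inc (\<alpha> (piv p q i)) x y"
  proof -
    fix i assume i: "i \<in> I" and ic: "inc (\<alpha> i) x y"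
    have "(y,x) \<in> boxo A (\<alpha> i)" using ic x y by (auto simp: boxo_def inc_def)
    hence "(x,y) \<in> Qr A \<alpha> M p q i" using all i by (auto simp: Lr_def lexr_def)
    hence k: "(x,y) \<in> Kr A \<alpha> M p q i" using ic by (auto simp: Qr_def inc_def)
    hence "(y,x) \<in> boxo A (\<alpha> (piv p q i))" by (auto simp: Kr_def lexr_def)
    note f2 = this
    have f1: "(x,y) \<in> boxo A (\<alpha> (piv p q i))" using bx[OF piv_I[OF i]] .
    show "((x,y) \<in> \<alpha> (piv p q i) \<and> (y,x) \<in> \<alpha> (piv p q i)) \<or> inc (\<alpha> (piv p q i)) x y"
      by (rule boxo_equiv[OF f1 f2])
  qed
  have pp: "piv p q p = q" and pj: "\<And>j. j \<noteq> p \<Longrightarrow> piv p q j = p" by (auto simp: piv_def)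
  have claim: "\<not> inc (\<alpha> p) x y"
  proof
    assume ip: "inc (\<alpha> p) x y"
    have g2: "((x,y) \<in> \<alpha> q \<and> (y,x) \<in> \<alpha> q) \<or> inc (\<alpha> q) x y" using G2[OF pI ip] pp by simp
    have g: "((x,y) \<in> \<alpha> q \<and> (y,x) \<in> \<alpha> q) \<longrightarrow> (y,x) \<in> M" "inc (\<alpha> q) x y \<longrightarrow> (y,x) \<in> M"
      using G[OF pI ip] pp by auto
    show False
    proof (cases "inc (\<alpha> q) x y")
      case False
      hence "(x,y) \<in> \<alpha> q" "(y,x) \<in> \<alpha> q" using g2 by auto
      thus False using H[OF qI] g nM by blast
    next
      case True
      have "(x,y) \<in> M" using G[OF qI True] pj[of q] pq ip by auto
      thus False using g True nM by blast
    qed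
  qed
  obtain j where j: "j \<in> I" "(x,y) \<notin> \<alpha> j" using gint[OF x y] ng by blast
  hence ij: "inc (\<alpha> j) x y" using F1 by blast
  have "j \<noteq> p" using ij claim by auto
  hence pv: "piv p q j = p" by (simp add: piv_def)
  have "(x,y) \<in> \<alpha> p" "(y,x) \<in> \<alpha> p" using G2[OF j(1) ij] pv claim by auto
  moreover have "(y,x) \<in> M" using G[OF j(1) ij] pv calculation by auto
  ultimately show False using H[OF pI] nM by blast
qed

end



definition lq :: "'a rel \<Rightarrow> 'a rel \<Rightarrow> 'a set rel" where
  "lq \<gamma> T = {((\<gamma> \<inter> \<gamma>\<inverse>) `` {a}, (\<gamma> \<inter> \<gamma>\<inverse>) `` {b}) | a b. (a, b) \<in> T}"

definition Phi :: "'a set \<Rightarrow> 'a rel \<Rightarrow> 'a set rel \<Rightarrow> 'a rel" where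
  "Phi A \<gamma> l = {(a,b). a \<in> A \<and> b \<in> A \<and> ((\<gamma> \<inter> \<gamma>\<inverse>) `` {a}, (\<gamma> \<inter> \<gamma>\<inverse>) `` {b}) \<in> l}"

context
  fixes A :: "'a set" and \<gamma> :: "'a rel"
  assumes pre: "preorder_on A \<gamma>"
begin

lemma g_props: "\<gamma> \<subseteq> A \<times> A" "\<And>x. x \<in> A \<Longrightarrow> (x,x) \<in> \<gamma>" "trans \<gamma>"
  using pre by (auto simp: preorder_on_def refl_on_def)

lemma E_equiv: "equiv A (\<gamma> \<inter> \<gamma>\<inverse>)"
proof (rule equivI)
  show "\<gamma> \<inter> \<gamma>\<inverse> \<subseteq> A \<times> A" using g_props(1) by blast
  show "refl_on A (\<gamma> \<inter> \<gamma>\<inverse>)" using g_props(2) unfolding refl_on_def by blast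
  show "sym (\<gamma> \<inter> \<gamma>\<inverse>)" unfolding sym_def by blast
  show "trans (\<gamma> \<inter> \<gamma>\<inverse>)" using g_props(3) unfolding trans_def by blast
qed

lemma cls_eq: "a \<in> A \<Longrightarrow> b \<in> A \<Longrightarrow> ((\<gamma> \<inter> \<gamma>\<inverse>) `` {a} = (\<gamma> \<inter> \<gamma>\<inverse>) `` {b}) \<longleftrightarrow> (a,b) \<in> \<gamma> \<and> (b,a) \<in> \<gamma>"
  using eq_equiv_class_iff[OF E_equiv] by auto

lemma cls_in: "a \<in> A \<Longrightarrow> (\<gamma> \<inter> \<gamma>\<inverse>) `` {a} \<in> qclasses A \<gamma>"
  by (simp add: qclasses_def quotientI)

lemma X_cases: "u \<in> qclasses A \<gamma> \<Longrightarrow> (\<And>a. a \<in> A \<Longrightarrow> u = (\<gamma> \<inter> \<gamma>\<inverse>) `` {a} \<Longrightarrow> P) \<Longrightarrow> P"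
  unfolding qclasses_def by (erule quotientE) blast

lemma cls_A: "(\<gamma> \<inter> \<gamma>\<inverse>) `` {a} = (\<gamma> \<inter> \<gamma>\<inverse>) `` {b} \<Longrightarrow> a \<in> A \<Longrightarrow> b \<in> A"
  using E_equiv equiv_class_self[OF E_equiv] g_props(1) by blast

lemma lq_iff:
  assumes T: "\<gamma> \<subseteq> T" "trans T" and a: "a \<in> A" and b: "b \<in> A"
  shows "((\<gamma> \<inter> \<gamma>\<inverse>) `` {a}, (\<gamma> \<inter> \<gamma>\<inverse>) `` {b}) \<in> lq \<gamma> T \<longleftrightarrow> (a,b) \<in> T"
proof
  assume "((\<gamma> \<inter> \<gamma>\<inverse>) `` {a}, (\<gamma> \<inter> \<gamma>\<inverse>) `` {b}) \<in> lq \<gamma> T"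
  then obtain a' b' where e: "(\<gamma> \<inter> \<gamma>\<inverse>) `` {a} = (\<gamma> \<inter> \<gamma>\<inverse>) `` {a'}"
    "(\<gamma> \<inter> \<gamma>\<inverse>) `` {b} = (\<gamma> \<inter> \<gamma>\<inverse>) `` {b'}" and t: "(a',b') \<in> T"
    unfolding lq_def by blast
  have a': "a' \<in> A" using cls_A[OF e(1) a] .
  have b': "b' \<in> A" using cls_A[OF e(2) b] .
  have "(a,a') \<in> \<gamma>" "(b',b) \<in> \<gamma>" using e cls_eq[OF a a'] cls_eq[OF b b'] by auto
  hence "(a,a') \<in> T" "(b',b) \<in> T" using T(1) by auto
  thus "(a,b) \<in> T" using t T(2) unfolding trans_def by blast
qed (auto simp: lq_def)

lemma r_of_lq: "r_of \<gamma> = lq \<gamma> \<gamma>"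
  by (simp add: r_of_def lq_def)

lemma r_iff: "a \<in> A \<Longrightarrow> b \<in> A \<Longrightarrow> ((\<gamma> \<inter> \<gamma>\<inverse>) `` {a}, (\<gamma> \<inter> \<gamma>\<inverse>) `` {b}) \<in> r_of \<gamma> \<longleftrightarrow> (a,b) \<in> \<gamma>"
  using lq_iff[of \<gamma> a b] g_props(3) r_of_lq by auto

lemma lq_sub: "T \<subseteq> A \<times> A \<Longrightarrow> lq \<gamma> T \<subseteq> qclasses A \<gamma> \<times> qclasses A \<gamma>"
  using cls_in by (auto simp: lq_def)

lemma lq_linear:
  assumes T: "tp A T" "\<gamma> \<subseteq> T" and TT: "\<And>x y. (x,y) \<in> T \<Longrightarrow> (y,x) \<in> T \<Longrightarrow> (x,y) \<in> \<gamma>"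
  shows "linear_order_on (qclasses A \<gamma>) (lq \<gamma> T)" "r_of \<gamma> \<subseteq> lq \<gamma> T"
proof -
  have Tp: "T \<subseteq> A \<times> A" "\<And>x. x \<in> A \<Longrightarrow> (x,x) \<in> T" "trans T" "total_on A T"
    using T(1) by (auto simp: tp_def preorder_on_def refl_on_def)
  note li = lq_iff[OF T(2) Tp(3)]
  show "r_of \<gamma> \<subseteq> lq \<gamma> T"
    unfolding r_of_def lq_def using T(2) by blast
  have "lq \<gamma> T \<subseteq> qclasses A \<gamma> \<times> qclasses A \<gamma>" using lq_sub[OF Tp(1)] .
  moreover have "refl_on (qclasses A \<gamma>) (lq \<gamma> T)"
    unfolding refl_on_def by (auto elim!: X_cases simp: li Tp(2))
  moreover have "trans (lq \<gamma> T)" unfolding trans_def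
  proof (intro allI impI)
    fix u v w assume uv: "(u,v) \<in> lq \<gamma> T" and vw: "(v,w) \<in> lq \<gamma> T"
    have "u \<in> qclasses A \<gamma>" "v \<in> qclasses A \<gamma>" "w \<in> qclasses A \<gamma>"
      using uv vw lq_sub[OF Tp(1)] by auto
    then obtain a b c where abc: "a \<in> A" "b \<in> A" "c \<in> A" "u = (\<gamma> \<inter> \<gamma>\<inverse>) `` {a}"
      "v = (\<gamma> \<inter> \<gamma>\<inverse>) `` {b}" "w = (\<gamma> \<inter> \<gamma>\<inverse>) `` {c}" by (metis X_cases)
    show "(u,w) \<in> lq \<gamma> T" using uv vw Tp(3) unfolding abc li[OF abc(1,2)] li[OF abc(2,3)] li[OF abc(1,3)]
      trans_def by blast
  qed
  moreover have "antisym (lq \<gamma> T)" unfolding antisym_def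
  proof (intro allI impI)
    fix u v assume uv: "(u,v) \<in> lq \<gamma> T" and vu: "(v,u) \<in> lq \<gamma> T"
    have "u \<in> qclasses A \<gamma>" "v \<in> qclasses A \<gamma>"
      using uv lq_sub[OF Tp(1)] by auto
    then obtain a b where ab: "a \<in> A" "b \<in> A" "u = (\<gamma> \<inter> \<gamma>\<inverse>) `` {a}"
      "v = (\<gamma> \<inter> \<gamma>\<inverse>) `` {b}" by (metis X_cases)
    have "(a,b) \<in> T" "(b,a) \<in> T" using uv vu unfolding ab li[OF ab(1,2)] li[OF ab(2,1)] by auto
    hence "(a,b) \<in> \<gamma>" "(b,a) \<in> \<gamma>" using TT by auto
    thus "u = v" using cls_eq[OF ab(1,2)] ab by auto
  qed
  moreover have "total_on (qclasses A \<gamma>) (lq \<gamma> T)" unfolding total_on_def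
  proof (intro ballI impI)
    fix u v assume "u \<in> qclasses A \<gamma>" "v \<in> qclasses A \<gamma>" "u \<noteq> v"
    then obtain a b where ab: "a \<in> A" "b \<in> A" "u = (\<gamma> \<inter> \<gamma>\<inverse>) `` {a}"
      "v = (\<gamma> \<inter> \<gamma>\<inverse>) `` {b}" by (metis X_cases)
    have "a \<noteq> b" using ab \<open>u \<noteq> v\<close> by auto
    hence "(a,b) \<in> T \<or> (b,a) \<in> T" using Tp(4) ab unfolding total_on_def by blast
    thus "(u,v) \<in> lq \<gamma> T \<or> (v,u) \<in> lq \<gamma> T" unfolding ab li[OF ab(1,2)] li[OF ab(2,1)] .
  qed
  ultimately show "linear_order_on (qclasses A \<gamma>) (lq \<gamma> T)"
    by (simp add: linear_order_on_def partial_order_on_def preorder_on_def)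
qed

lemma Phi_props:
  assumes l: "linear_order_on (qclasses A \<gamma>) l" "r_of \<gamma> \<subseteq> l"
  shows "tp A (Phi A \<gamma> l)" "\<gamma> \<subseteq> Phi A \<gamma> l"
    "\<And>x y. (x,y) \<in> Phi A \<gamma> l \<Longrightarrow> (y,x) \<in> Phi A \<gamma> l \<Longrightarrow> (x,y) \<in> \<gamma>"
proof -
  have lp: "refl_on (qclasses A \<gamma>) l" "trans l" "antisym l" "total_on (qclasses A \<gamma>) l"
    using l by (auto simp: linear_order_on_def partial_order_on_def preorder_on_def)
  show "tp A (Phi A \<gamma> l)"
    unfolding tp_def preorder_on_def
  proof (intro conjI)
    show "Phi A \<gamma> l \<subseteq> A \<times> A" by (auto simp: Phi_def)
    show "refl_on A (Phi A \<gamma> l)" using lp(1) cls_in by (auto simp: Phi_def refl_on_def)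
    show "trans (Phi A \<gamma> l)" using lp(2) by (auto simp: Phi_def trans_def)
    show "total_on A (Phi A \<gamma> l)" unfolding total_on_def
    proof (intro ballI impI)
      fix x y assume x: "x \<in> A" and y: "y \<in> A" and "x \<noteq> y"
      show "(x,y) \<in> Phi A \<gamma> l \<or> (y,x) \<in> Phi A \<gamma> l"
      proof (cases "(\<gamma> \<inter> \<gamma>\<inverse>) `` {x} = (\<gamma> \<inter> \<gamma>\<inverse>) `` {y}")
        case True thus ?thesis using lp(1) cls_in[OF x] x y by (auto simp: Phi_def refl_on_def)
      next
        case False thus ?thesis using lp(4) cls_in[OF x] cls_in[OF y] x y
          by (auto simp: Phi_def total_on_def)
      qed
    qed
  qed
  show "\<gamma> \<subseteq> Phi A \<gamma> l"
  proof (rule subrelI)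
    fix x y assume g: "(x,y) \<in> \<gamma>"
    hence "x \<in> A" "y \<in> A" using g_props(1) by auto
    thus "(x,y) \<in> Phi A \<gamma> l" using g r_iff l(2) by (auto simp: Phi_def)
  qed
  fix x y assume "(x,y) \<in> Phi A \<gamma> l" "(y,x) \<in> Phi A \<gamma> l"
  hence "x \<in> A" "y \<in> A" "(\<gamma> \<inter> \<gamma>\<inverse>) `` {x} = (\<gamma> \<inter> \<gamma>\<inverse>) `` {y}"
    using lp(3) by (auto simp: Phi_def antisym_def)
  thus "(x,y) \<in> \<gamma>" using cls_eq by auto
qed

lemma r_partial: "partial_order_on (qclasses A \<gamma>) (r_of \<gamma>)"
proof -
  have "tp A \<gamma> \<or> True" by simp
  have sub: "r_of \<gamma> \<subseteq> qclasses A \<gamma> \<times> qclasses A \<gamma>" using lq_sub[OF g_props(1)] r_of_lq by simp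
  note ri = r_iff
  have "refl_on (qclasses A \<gamma>) (r_of \<gamma>)"
    unfolding refl_on_def by (auto elim!: X_cases simp: ri g_props(2))
  moreover have "trans (r_of \<gamma>)" unfolding trans_def
  proof (intro allI impI)
    fix u v w assume uv: "(u,v) \<in> r_of \<gamma>" and vw: "(v,w) \<in> r_of \<gamma>"
    have "u \<in> qclasses A \<gamma>" "v \<in> qclasses A \<gamma>" "w \<in> qclasses A \<gamma>" using uv vw sub by auto
    then obtain a b c where abc: "a \<in> A" "b \<in> A" "c \<in> A" "u = (\<gamma> \<inter> \<gamma>\<inverse>) `` {a}"
      "v = (\<gamma> \<inter> \<gamma>\<inverse>) `` {b}" "w = (\<gamma> \<inter> \<gamma>\<inverse>) `` {c}" by (metis X_cases)
    show "(u,w) \<in> r_of \<gamma>" using uv vw g_props(3) unfolding abc ri[OF abc(1,2)] ri[OF abc(2,3)] ri[OF abc(1,3)]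
      trans_def by blast
  qed
  moreover have "antisym (r_of \<gamma>)" unfolding antisym_def
  proof (intro allI impI)
    fix u v assume uv: "(u,v) \<in> r_of \<gamma>" and vu: "(v,u) \<in> r_of \<gamma>"
    have "u \<in> qclasses A \<gamma>" "v \<in> qclasses A \<gamma>" using uv sub by auto
    then obtain a b where ab: "a \<in> A" "b \<in> A" "u = (\<gamma> \<inter> \<gamma>\<inverse>) `` {a}"
      "v = (\<gamma> \<inter> \<gamma>\<inverse>) `` {b}" by (metis X_cases)
    have "(a,b) \<in> \<gamma>" "(b,a) \<in> \<gamma>" using uv vu unfolding ab ri[OF ab(1,2)] ri[OF ab(2,1)] by auto
    thus "u = v" using cls_eq[OF ab(1,2)] ab by auto
  qed
  ultimately show ?thesis using sub by (simp add: partial_order_on_def preorder_on_def)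
qed

end



lemma min_ex:
  fixes P :: "'b set \<Rightarrow> bool"
  assumes "\<exists>R. P R"
  shows "\<exists>R. P R \<and> (\<forall>R'. P R' \<longrightarrow> ( (card_of R), (card_of R') ) \<in> ordLeq)"
proof -
  let ?C = "{(card_of R) | R. P R}"
  have "?C \<noteq> {}" using assms by blast
  moreover have "\<forall>r\<in>?C. Well_order r" using card_of_Well_order by blast
  ultimately obtain r where r: "r \<in> ?C" "\<forall>r'\<in>?C. (r, r') \<in> ordLeq"
    using exists_minim_Well_order[of ?C] by blast
  then obtain R where "P R" "r = (card_of R)" by blast
  thus ?thesis using r by blast
qed

lemma two_elems:
  assumes "( (card_of {0::nat,1}), (card_of R) ) \<in> ordLeq"
  shows "\<exists>p\<in>R. \<exists>q\<in>R. p \<noteq> q"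
proof -
  obtain f where f: "inj_on f {0::nat,1}" "f ` {0,1} \<subseteq> R" using iffD2[OF card_of_ordLeq assms(1)] by blast
  hence "f 0 \<noteq> f 1" "f 0 \<in> R" "f 1 \<in> R" by (auto simp: inj_on_def)
  thus ?thesis by blast
qed

lemma two_elems_rev:
  assumes "p \<in> R" "q \<in> R" "p \<noteq> q"
  shows "( (card_of {0::nat,1}), (card_of R) ) \<in> ordLeq"
proof -
  let ?f = "\<lambda>n::nat. if n = 0 then p else q"
  have "inj_on ?f {0,1}" "?f ` {0,1} \<subseteq> R" using assms by (auto simp: inj_on_def)
  thus ?thesis by (intro card_of_ordLeq[THEN iffD1] exI[of _ ?f]) blast
qed

lemma one_elem:
  assumes "( (card_of R), (card_of {0::nat}) ) \<in> ordIso"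
  shows "\<exists>a. R = {a}"
proof -
  have "(card_of {0::nat}, card_of R) \<in> ordIso" using assms ordIso_symmetric by blast
  then obtain f where "bij_betw f {0::nat} R" using iffD2[OF card_of_ordIso] by blast
  hence "R = {f 0}" by (auto simp: bij_betw_def)
  thus ?thesis by blast
qed

lemma one_elem_rev:
  shows "( (card_of {a}), (card_of {0::nat}) ) \<in> ordIso"
proof -
  have "bij_betw (\<lambda>_. 0::nat) {a} {0}" by (auto simp: bij_betw_def)
  thus ?thesis by (intro card_of_ordIso[THEN iffD1] exI[of _ "\<lambda>_. 0::nat"])
qed

lemma le_single:
  assumes "( (card_of L), (card_of {x}) ) \<in> ordLeq" "a \<in> L" "b \<in> L" shows "a = b"
proof -
  obtain f where f: "inj_on f L" "f ` L \<subseteq> {x}" using iffD2[OF card_of_ordLeq assms(1)] by blast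
  hence "f a = f b" using assms(2,3) by blast
  thus ?thesis using f(1) assms(2,3) unfolding inj_on_def by blast
qed

lemma le_empty:
  assumes "( (card_of R), (card_of ({}::'c set)) ) \<in> ordLeq" shows "R = {}"
proof -
  obtain f where "inj_on f R" "f ` R \<subseteq> ({}::'c set)" using iffD2[OF card_of_ordLeq assms(1)] by blast
  thus ?thesis by auto
qed

context
  fixes A :: "'a set" and \<gamma> :: "'a rel"
  assumes pre: "preorder_on A \<gamma>"
begin

lemma lin_exists: "\<exists>L. lin_realizer (qclasses A \<gamma>) (r_of \<gamma>) L"
proof -
  let ?L = "{l. linear_order_on (qclasses A \<gamma>) l \<and> r_of \<gamma> \<subseteq> l}"
  have po: "partial_order_on (qclasses A \<gamma>) (r_of \<gamma>)" using r_partial[OF pre] .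
  have sub: "r_of \<gamma> \<subseteq> qclasses A \<gamma> \<times> qclasses A \<gamma>" using po by (auto simp: partial_order_on_def preorder_on_def)
  have "(qclasses A \<gamma> \<times> qclasses A \<gamma>) \<inter> \<Inter>?L = r_of \<gamma>"
  proof
    show "r_of \<gamma> \<subseteq> (qclasses A \<gamma> \<times> qclasses A \<gamma>) \<inter> \<Inter>?L" using sub by blast
    show "(qclasses A \<gamma> \<times> qclasses A \<gamma>) \<inter> \<Inter>?L \<subseteq> r_of \<gamma>"
    proof (rule subrelI)
      fix u v assume uv: "(u,v) \<in> (qclasses A \<gamma> \<times> qclasses A \<gamma>) \<inter> \<Inter>?L"
      show "(u,v) \<in> r_of \<gamma>"
      proof (rule ccontr)
        assume "(u,v) \<notin> r_of \<gamma>"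
        then obtain l where "linear_order_on (qclasses A \<gamma>) l" "r_of \<gamma> \<subseteq> l" "(u,v) \<notin> l"
          using szpilrajn_pair[OF po _ _ \<open>(u,v) \<notin> r_of \<gamma>\<close>] uv by blast
        thus False using uv by blast
      qed
    qed
  qed
  moreover have "\<forall>l\<in>?L. linear_order_on (qclasses A \<gamma>) l \<and> r_of \<gamma> \<subseteq> l" by blast
  ultimately have "lin_realizer (qclasses A \<gamma>) (r_of \<gamma>) ?L" unfolding lin_realizer_def by (intro conjI)
  thus ?thesis by (rule exI)
qed

lemma R1:
  assumes L: "lin_realizer (qclasses A \<gamma>) (r_of \<gamma>) L"
  shows "hs_realizer A \<gamma> (Phi A \<gamma> ` L)"
proof -
  have Lp: "\<And>l. l \<in> L \<Longrightarrow> linear_order_on (qclasses A \<gamma>) l \<and> r_of \<gamma> \<subseteq> l"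
    and Li: "(qclasses A \<gamma> \<times> qclasses A \<gamma>) \<inter> \<Inter>L = r_of \<gamma>"
    using L by (auto simp: lin_realizer_def)
  have hs: "\<forall>\<alpha>\<in>Phi A \<gamma> ` L. half_space A \<alpha>"
    using Lp Phi_props(1)[OF pre] tp_half_space by blast
  have "(A \<times> A) \<inter> \<Inter>(Phi A \<gamma> ` L) = \<gamma>"
  proof
    show "\<gamma> \<subseteq> (A \<times> A) \<inter> \<Inter>(Phi A \<gamma> ` L)"
      using g_props(1)[OF pre] Phi_props(2)[OF pre] Lp by blast
    show "(A \<times> A) \<inter> \<Inter>(Phi A \<gamma> ` L) \<subseteq> \<gamma>"
    proof (rule subrelI)
      fix a b assume ab: "(a,b) \<in> (A \<times> A) \<inter> \<Inter>(Phi A \<gamma> ` L)"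
      hence a: "a \<in> A" "b \<in> A" by auto
      have "\<forall>l\<in>L. ((\<gamma> \<inter> \<gamma>\<inverse>) `` {a}, (\<gamma> \<inter> \<gamma>\<inverse>) `` {b}) \<in> l" using ab by (auto simp: Phi_def)
      hence "((\<gamma> \<inter> \<gamma>\<inverse>) `` {a}, (\<gamma> \<inter> \<gamma>\<inverse>) `` {b}) \<in> r_of \<gamma>"
        using Li cls_in[OF pre a(1)] cls_in[OF pre a(2)] by blast
      thus "(a,b) \<in> \<gamma>" using r_iff[OF pre a] by simp
    qed
  qed
  thus ?thesis using hs by (simp add: hs_realizer_def)
qed

lemma R2gen:
  fixes I :: "'i set" and \<alpha> :: "'i \<Rightarrow> 'a rel" and p q :: 'i
  assumes pI: "p \<in> I" and qI: "q \<in> I" and pq: "p \<noteq> q"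
    and hs: "\<And>i. i \<in> I \<Longrightarrow> half_space A (\<alpha> i)"
    and ga: "\<And>i. i \<in> I \<Longrightarrow> \<gamma> \<subseteq> \<alpha> i"
    and gint: "\<And>x y. x \<in> A \<Longrightarrow> y \<in> A \<Longrightarrow> (\<forall>i\<in>I. (x,y) \<in> \<alpha> i) \<Longrightarrow> (x,y) \<in> \<gamma>"
  shows "\<exists>L'. lin_realizer (qclasses A \<gamma>) (r_of \<gamma>) L' \<and> ( (card_of L'), (card_of I) ) \<in> ordLeq"
proof -
  obtain l0 where l0: "linear_order_on (qclasses A \<gamma>) l0" "r_of \<gamma> \<subseteq> l0"
    using szpilrajn[OF r_partial[OF pre]] by blast
  define M where "M = Phi A \<gamma> l0"
  have M: "tp A M" "\<gamma> \<subseteq> M" "\<And>x y. (x,y) \<in> M \<Longrightarrow> (y,x) \<in> M \<Longrightarrow> (x,y) \<in> \<gamma>"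
    using Phi_props[OF pre l0] unfolding M_def by auto
  note ctx = pI qI pq hs ga gint M
  define L' where "L' = (\<lambda>i. lq \<gamma> (Lr A \<alpha> M p q i)) ` I"
  have Lt: "\<And>i. i \<in> I \<Longrightarrow> tp A (Lr A \<alpha> M p q i)" using Lr_tp[where p=p and q=q and I=I and \<alpha>=\<alpha> and A=A and \<gamma>=\<gamma> and M=M, OF ctx] by blast
  have Lg: "\<And>i. i \<in> I \<Longrightarrow> \<gamma> \<subseteq> Lr A \<alpha> M p q i" using g_Lr[where p=p and q=q and I=I and \<alpha>=\<alpha> and A=A and \<gamma>=\<gamma> and M=M, OF ctx] by blast
  have LL: "\<And>i x y. i \<in> I \<Longrightarrow> (x,y) \<in> Lr A \<alpha> M p q i \<Longrightarrow> (y,x) \<in> Lr A \<alpha> M p q i \<Longrightarrow> (x,y) \<in> \<gamma>"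
    using Lr_g[where p=p and q=q and I=I and \<alpha>=\<alpha> and A=A and \<gamma>=\<gamma> and M=M, OF ctx] by blast
  have Lint: "\<And>x y. x \<in> A \<Longrightarrow> y \<in> A \<Longrightarrow> \<forall>i\<in>I. (x,y) \<in> Lr A \<alpha> M p q i \<Longrightarrow> (x,y) \<in> \<gamma>"
    using Lr_int[where p=p and q=q and I=I and \<alpha>=\<alpha> and A=A and \<gamma>=\<gamma> and M=M, OF ctx] by blast
  have lin: "\<And>i. i \<in> I \<Longrightarrow> linear_order_on (qclasses A \<gamma>) (lq \<gamma> (Lr A \<alpha> M p q i)) \<and> r_of \<gamma> \<subseteq> lq \<gamma> (Lr A \<alpha> M p q i)"
  proof -
    fix i assume i: "i \<in> I"
    show "linear_order_on (qclasses A \<gamma>) (lq \<gamma> (Lr A \<alpha> M p q i)) \<and> r_of \<gamma> \<subseteq> lq \<gamma> (Lr A \<alpha> M p q i)"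
      using lq_linear[OF pre Lt[OF i] Lg[OF i] LL[OF i]] by blast
  qed
  have "(qclasses A \<gamma> \<times> qclasses A \<gamma>) \<inter> \<Inter>L' = r_of \<gamma>"
  proof
    show "r_of \<gamma> \<subseteq> (qclasses A \<gamma> \<times> qclasses A \<gamma>) \<inter> \<Inter>L'"
      using lin lq_sub[OF pre g_props(1)[OF pre]] r_of_lq[OF pre] unfolding L'_def by auto
    show "(qclasses A \<gamma> \<times> qclasses A \<gamma>) \<inter> \<Inter>L' \<subseteq> r_of \<gamma>"
    proof (rule subrelI)
      fix u v assume uv: "(u,v) \<in> (qclasses A \<gamma> \<times> qclasses A \<gamma>) \<inter> \<Inter>L'"
      have "u \<in> qclasses A \<gamma>" "v \<in> qclasses A \<gamma>" using uv by auto
      then obtain a b where ab: "a \<in> A" "b \<in> A" "u = (\<gamma> \<inter> \<gamma>\<inverse>) `` {a}"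
        "v = (\<gamma> \<inter> \<gamma>\<inverse>) `` {b}" using X_cases[OF pre] by metis
      have "\<forall>i\<in>I. (a,b) \<in> Lr A \<alpha> M p q i"
      proof
        fix i assume i: "i \<in> I"
        have "(u,v) \<in> lq \<gamma> (Lr A \<alpha> M p q i)" using uv i unfolding L'_def by blast
        moreover have "trans (Lr A \<alpha> M p q i)" using Lt[OF i] by (simp add: tp_def preorder_on_def)
        ultimately show "(a,b) \<in> Lr A \<alpha> M p q i" using lq_iff[OF pre Lg[OF i] _ ab(1,2)] ab by simp
      qed
      hence "(a,b) \<in> \<gamma>" using Lint ab by blast
      thus "(u,v) \<in> r_of \<gamma>" using r_iff[OF pre ab(1,2)] ab by simp
    qed
  qed
  hence "lin_realizer (qclasses A \<gamma>) (r_of \<gamma>) L'"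
    unfolding lin_realizer_def L'_def using lin by auto
  moreover have "( (card_of L'), (card_of I) ) \<in> ordLeq" unfolding L'_def by (rule card_of_image)
  ultimately show ?thesis by blast
qed

lemma box_total:
  assumes h: "half_space A \<gamma>" and x: "x \<in> A" and y: "y \<in> A" and ne: "x \<noteq> y"
    and n: "(x,y) \<notin> \<gamma>" "(y,x) \<notin> \<gamma>"
  shows "\<exists>B\<in>boxes A \<gamma>. empty_box \<gamma> B \<and> (\<exists>x\<in>B. \<exists>y\<in>B. x \<noteq> y)"
proof -
  define B where "B = box_equiv A \<gamma> `` {x}"
  have Bb: "B \<in> boxes A \<gamma>" unfolding B_def boxes_def using x by (rule quotientI)
  have gp: "\<gamma> \<subseteq> A \<times> A" "\<And>z. z \<in> A \<Longrightarrow> (z,z) \<in> \<gamma>" using g_props[OF pre] by auto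
  have xB: "x \<in> B" using x gp(2) by (auto simp: B_def box_equiv_def)
  have yB: "y \<in> B" using x y n by (auto simp: B_def box_equiv_def hs_compl_def)
  have ixy: "inc \<gamma> x y" using n by (simp add: inc_def)
  have Bc: "\<And>u. u \<in> B \<Longrightarrow> u \<in> A \<and> (u = x \<or> inc \<gamma> x u)"
  proof -
    fix u assume "u \<in> B"
    hence u: "(x,u) \<in> (\<gamma> \<inter> \<gamma>\<inverse>) \<union> (hs_compl A \<gamma> \<inter> (hs_compl A \<gamma>)\<inverse>)"
      by (simp add: B_def box_equiv_def)
    hence uA: "u \<in> A" using gp(1) by (auto simp: hs_compl_def)
    show "u \<in> A \<and> (u = x \<or> inc \<gamma> x u)"
    proof (cases "(x,u) \<in> \<gamma> \<and> (u,x) \<in> \<gamma>")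
      case True
      have "u = x"
      proof (rule ccontr)
        assume "u \<noteq> x"
        thus False using hs_N1[OF h uA x y _ _ ixy] True by blast
      qed
      thus ?thesis using uA by simp
    next
      case False
      hence "(x,u) \<in> hs_compl A \<gamma>" "(u,x) \<in> hs_compl A \<gamma>" using u by auto
      hence "u = x \<or> inc \<gamma> x u" by (auto simp: hs_compl_def inc_def)
      thus ?thesis using uA by simp
    qed
  qed
  have "empty_box \<gamma> B" unfolding empty_box_def
  proof
    show "\<gamma> \<inter> B \<times> B \<subseteq> Id_on B"
    proof (rule subrelI)
      fix u v assume uv: "(u,v) \<in> \<gamma> \<inter> B \<times> B"
      hence u: "u \<in> B" "v \<in> B" by auto
      have "u = v"
      proof (rule ccontr)
        assume uv': "u \<noteq> v"
        have cu: "u \<in> A" "u = x \<or> inc \<gamma> x u" and cv: "v \<in> A" "v = x \<or> inc \<gamma> x v" using Bc u by auto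
        show False
        proof (cases "u = x")
          case True thus False using cv uv uv' by (auto simp: inc_def)
        next
          case False
          hence iu: "inc \<gamma> u x" using cu by (auto simp: inc_def)
          show False
          proof (cases "v = x")
            case True thus False using iu uv by (auto simp: inc_def)
          next
            case False
            hence "inc \<gamma> x v" using cv by auto
            hence "inc \<gamma> u v" using hs_N2[OF h cu(1) x cv(1) iu _ uv'] by blast
            thus False using uv by (auto simp: inc_def)
          qed
        qed
      qed
      thus "(u,v) \<in> Id_on B" using u by auto
    qed
    show "Id_on B \<subseteq> \<gamma> \<inter> B \<times> B" using Bc gp(2) by auto
  qed
  thus ?thesis using Bb xB yB ne by blast
qed

lemma box_nontotal:
  assumes B: "B \<in> boxes A \<gamma>" "empty_box \<gamma> B" and xy: "x \<in> B" "y \<in> B" "x \<noteq> y"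
  shows "x \<in> A \<and> y \<in> A \<and> (x,y) \<notin> \<gamma> \<and> (y,x) \<notin> \<gamma>"
proof -
  have gp: "\<gamma> \<subseteq> A \<times> A" using g_props[OF pre] by auto
  obtain a where "B = box_equiv A \<gamma> `` {a}" using B(1) unfolding boxes_def by (auto elim: quotientE)
  hence "B \<subseteq> A" using gp by (auto simp: box_equiv_def hs_compl_def)
  moreover have "(x,y) \<notin> \<gamma>"
  proof
    assume "(x,y) \<in> \<gamma>"
    hence "(x,y) \<in> \<gamma> \<inter> B \<times> B" using xy by blast
    with B(2) have "(x,y) \<in> Id_on B" unfolding empty_box_def by blast
    thus False using xy by blast
  qed
  moreover have "(y,x) \<notin> \<gamma>"
  proof
    assume "(y,x) \<in> \<gamma>"
    hence "(y,x) \<in> \<gamma> \<inter> B \<times> B" using xy by blast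
    with B(2) have "(y,x) \<in> Id_on B" unfolding empty_box_def by blast
    thus False using xy by blast
  qed
  ultimately show ?thesis using xy by auto
qed

end



theorem theorem2p15:
  fixes A :: "'a set" and \<gamma> :: "'a rel"
  assumes "preorder_on A \<gamma>"
  shows "((hsdim A \<gamma>, card_of {0::nat}) \<in> ordIso \<longrightarrow>
            half_space A \<gamma> \<and>
            ((\<not> (\<exists>B\<in>boxes A \<gamma>. empty_box \<gamma> B \<and> (\<exists>x\<in>B. \<exists>y\<in>B. x \<noteq> y)))
               \<longrightarrow> (odim (qclasses A \<gamma>) (r_of \<gamma>), card_of {0::nat}) \<in> ordIso) \<and>
            ((\<exists>B\<in>boxes A \<gamma>. empty_box \<gamma> B \<and> (\<exists>x\<in>B. \<exists>y\<in>B. x \<noteq> y))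
               \<longrightarrow> (odim (qclasses A \<gamma>) (r_of \<gamma>), card_of {0::nat, 1}) \<in> ordIso))
       \<and> ((card_of {0::nat, 1}, hsdim A \<gamma>) \<in> ordLeq \<longrightarrow>
            (odim (qclasses A \<gamma>) (r_of \<gamma>), hsdim A \<gamma>) \<in> ordIso)"
proof -
  note pre = assms
  define R0 where "R0 = (SOME R. hs_realizer A \<gamma> R \<and>
      (\<forall>R'. hs_realizer A \<gamma> R' \<longrightarrow> (card_of R, card_of R') \<in> ordLeq))"
  define L0 where "L0 = (SOME L. lin_realizer (qclasses A \<gamma>) (r_of \<gamma>) L \<and>
      (\<forall>L'. lin_realizer (qclasses A \<gamma>) (r_of \<gamma>) L' \<longrightarrow> (card_of L, card_of L') \<in> ordLeq))"
  have hsd: "hsdim A \<gamma> = card_of R0" by (simp add: hsdim_def R0_def)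
  have od: "odim (qclasses A \<gamma>) (r_of \<gamma>) = card_of L0" by (simp add: odim_def L0_def)
  obtain L1 where L1: "lin_realizer (qclasses A \<gamma>) (r_of \<gamma>) L1" using lin_exists[OF pre] by blast
  have exR: "\<exists>R. hs_realizer A \<gamma> R" using R1[OF pre L1] by blast
  have exL: "\<exists>L. lin_realizer (qclasses A \<gamma>) (r_of \<gamma>) L" using L1 by blast
  have R0p: "hs_realizer A \<gamma> R0 \<and> (\<forall>R'. hs_realizer A \<gamma> R' \<longrightarrow> (card_of R0, card_of R') \<in> ordLeq)"
    unfolding R0_def by (rule someI_ex[OF min_ex[OF exR]])
  have L0p: "lin_realizer (qclasses A \<gamma>) (r_of \<gamma>) L0 \<and>
      (\<forall>L'. lin_realizer (qclasses A \<gamma>) (r_of \<gamma>) L' \<longrightarrow> (card_of L0, card_of L') \<in> ordLeq)"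
    unfolding L0_def by (rule someI_ex[OF min_ex[OF exL]])
  have R0r: "hs_realizer A \<gamma> R0" and L0r: "lin_realizer (qclasses A \<gamma>) (r_of \<gamma>) L0"
    using R0p L0p by auto
  have key1: "(card_of R0, card_of L0) \<in> ordLeq"
  proof -
    have "(card_of R0, card_of (Phi A \<gamma> ` L0)) \<in> ordLeq" using R0p R1[OF pre L0r] by blast
    moreover have "(card_of (Phi A \<gamma> ` L0), card_of L0) \<in> ordLeq" by (rule card_of_image)
    ultimately show ?thesis by (rule ordLeq_transitive)
  qed
  have R0hs: "\<And>i. i \<in> R0 \<Longrightarrow> half_space A i" and R0int: "(A \<times> A) \<inter> \<Inter>R0 = \<gamma>"
    using R0r by (auto simp: hs_realizer_def)
  have gsub: "\<gamma> \<subseteq> A \<times> A" using g_props(1)[OF pre] .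
  have part2: "(card_of {0::nat, 1}, hsdim A \<gamma>) \<in> ordLeq \<longrightarrow>
            (odim (qclasses A \<gamma>) (r_of \<gamma>), hsdim A \<gamma>) \<in> ordIso"
  proof
    assume "(card_of {0::nat, 1}, hsdim A \<gamma>) \<in> ordLeq"
    then obtain p q where pq: "p \<in> R0" "q \<in> R0" "p \<noteq> q" using two_elems hsd by metis
    have ga: "\<And>i. i \<in> R0 \<Longrightarrow> \<gamma> \<subseteq> i" using R0int by blast
    have gint: "\<And>x y. x \<in> A \<Longrightarrow> y \<in> A \<Longrightarrow> (\<forall>i\<in>R0. (x,y) \<in> i) \<Longrightarrow> (x,y) \<in> \<gamma>"
      using R0int by blast
    obtain L' where L': "lin_realizer (qclasses A \<gamma>) (r_of \<gamma>) L'" "(card_of L', card_of R0) \<in> ordLeq"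
      using R2gen[OF pre, where I=R0 and \<alpha>="\<lambda>x. x" and p=p and q=q] pq R0hs ga gint by blast
    have "(card_of L0, card_of L') \<in> ordLeq" using L0p L'(1) by blast
    hence "(card_of L0, card_of R0) \<in> ordLeq" using L'(2) by (rule ordLeq_transitive)
    thus "(odim (qclasses A \<gamma>) (r_of \<gamma>), hsdim A \<gamma>) \<in> ordIso"
      unfolding od hsd using key1 ordIso_iff_ordLeq by blast
  qed
  have part1: "(hsdim A \<gamma>, card_of {0::nat}) \<in> ordIso \<longrightarrow>
            half_space A \<gamma> \<and>
            ((\<not> (\<exists>B\<in>boxes A \<gamma>. empty_box \<gamma> B \<and> (\<exists>x\<in>B. \<exists>y\<in>B. x \<noteq> y)))
               \<longrightarrow> (odim (qclasses A \<gamma>) (r_of \<gamma>), card_of {0::nat}) \<in> ordIso) \<and>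
            ((\<exists>B\<in>boxes A \<gamma>. empty_box \<gamma> B \<and> (\<exists>x\<in>B. \<exists>y\<in>B. x \<noteq> y))
               \<longrightarrow> (odim (qclasses A \<gamma>) (r_of \<gamma>), card_of {0::nat, 1}) \<in> ordIso)"
  proof
    assume "(hsdim A \<gamma>, card_of {0::nat}) \<in> ordIso"
    then obtain a where a: "R0 = {a}" using one_elem hsd by metis
    have ha: "half_space A a" using R0hs a by blast
    have "a \<subseteq> A \<times> A" using ha by (simp add: half_space_def preorder_on_def)
    hence "a = \<gamma>" using R0int a by auto
    hence hg: "half_space A \<gamma>" using ha by simp
    have po: "partial_order_on (qclasses A \<gamma>) (r_of \<gamma>)" using r_partial[OF pre] .
    have rsub: "r_of \<gamma> \<subseteq> qclasses A \<gamma> \<times> qclasses A \<gamma>"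
      using po by (simp add: partial_order_on_def preorder_on_def)
    have L0int: "(qclasses A \<gamma> \<times> qclasses A \<gamma>) \<inter> \<Inter>L0 = r_of \<gamma>"
      and L0lin: "\<And>l. l \<in> L0 \<Longrightarrow> linear_order_on (qclasses A \<gamma>) l"
      using L0r by (auto simp: lin_realizer_def)
    have pa: "(\<not> (\<exists>B\<in>boxes A \<gamma>. empty_box \<gamma> B \<and> (\<exists>x\<in>B. \<exists>y\<in>B. x \<noteq> y)))
               \<longrightarrow> (odim (qclasses A \<gamma>) (r_of \<gamma>), card_of {0::nat}) \<in> ordIso"
    proof
      assume nb: "\<not> (\<exists>B\<in>boxes A \<gamma>. empty_box \<gamma> B \<and> (\<exists>x\<in>B. \<exists>y\<in>B. x \<noteq> y))"
      have tg: "total_on A \<gamma>" unfolding total_on_def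
      proof (intro ballI impI)
        fix x y assume "x \<in> A" "y \<in> A" "x \<noteq> y"
        show "(x,y) \<in> \<gamma> \<or> (y,x) \<in> \<gamma>"
        proof (rule ccontr)
          assume "\<not> ((x,y) \<in> \<gamma> \<or> (y,x) \<in> \<gamma>)"
          thus False using box_total[OF pre hg \<open>x \<in> A\<close> \<open>y \<in> A\<close> \<open>x \<noteq> y\<close>] nb by blast
        qed
      qed
      have "total_on (qclasses A \<gamma>) (r_of \<gamma>)" unfolding total_on_def
      proof (intro ballI impI)
        fix u v assume "u \<in> qclasses A \<gamma>" "v \<in> qclasses A \<gamma>" "u \<noteq> v"
        then obtain x y where xy: "x \<in> A" "y \<in> A" "u = (\<gamma> \<inter> \<gamma>\<inverse>) `` {x}" "v = (\<gamma> \<inter> \<gamma>\<inverse>) `` {y}"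
          using X_cases[OF pre] by metis
        have "x \<noteq> y" using xy \<open>u \<noteq> v\<close> by auto
        hence "(x,y) \<in> \<gamma> \<or> (y,x) \<in> \<gamma>" using tg xy unfolding total_on_def by blast
        thus "(u,v) \<in> r_of \<gamma> \<or> (v,u) \<in> r_of \<gamma>" using r_iff[OF pre xy(1,2)] r_iff[OF pre xy(2,1)] xy by simp
      qed
      hence "linear_order_on (qclasses A \<gamma>) (r_of \<gamma>)" using po by (simp add: linear_order_on_def)
      hence "lin_realizer (qclasses A \<gamma>) (r_of \<gamma>) {r_of \<gamma>}"
        using rsub unfolding lin_realizer_def by blast
      hence le: "(card_of L0, card_of {r_of \<gamma>}) \<in> ordLeq" using L0p by blast
      have "L0 \<noteq> {}"
      proof
        assume "L0 = {}"
        hence "(card_of R0, card_of ({}::'a set rel set)) \<in> ordLeq" using key1 by simp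
        hence "R0 = {}" by (rule le_empty)
        thus False using a by simp
      qed
      then obtain l where l: "l \<in> L0" by blast
      have "L0 = {l}" using le_single[OF le] l by blast
      thus "(odim (qclasses A \<gamma>) (r_of \<gamma>), card_of {0::nat}) \<in> ordIso"
        unfolding od using one_elem_rev by simp
    qed
    have pb: "(\<exists>B\<in>boxes A \<gamma>. empty_box \<gamma> B \<and> (\<exists>x\<in>B. \<exists>y\<in>B. x \<noteq> y))
               \<longrightarrow> (odim (qclasses A \<gamma>) (r_of \<gamma>), card_of {0::nat, 1}) \<in> ordIso"
    proof
      assume "\<exists>B\<in>boxes A \<gamma>. empty_box \<gamma> B \<and> (\<exists>x\<in>B. \<exists>y\<in>B. x \<noteq> y)"
      then obtain B x y where B: "B \<in> boxes A \<gamma>" "empty_box \<gamma> B" "x \<in> B" "y \<in> B" "x \<noteq> y" by blast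
      have xy: "x \<in> A" "y \<in> A" "(x,y) \<notin> \<gamma>" "(y,x) \<notin> \<gamma>" using box_nontotal[OF pre B] by auto
      define u where "u = (\<gamma> \<inter> \<gamma>\<inverse>) `` {x}"
      define v where "v = (\<gamma> \<inter> \<gamma>\<inverse>) `` {y}"
      have uv: "u \<in> qclasses A \<gamma>" "v \<in> qclasses A \<gamma>" using cls_in[OF pre] xy unfolding u_def v_def by auto
      have nuv: "(u,v) \<notin> r_of \<gamma>" "(v,u) \<notin> r_of \<gamma>"
        using r_iff[OF pre xy(1,2)] r_iff[OF pre xy(2,1)] xy unfolding u_def v_def by auto
      have "\<exists>l1\<in>L0. \<exists>l2\<in>L0. l1 \<noteq> l2"
      proof (rule ccontr)
        assume "\<not> (\<exists>l1\<in>L0. \<exists>l2\<in>L0. l1 \<noteq> l2)"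
        hence one: "\<And>l1 l2. l1 \<in> L0 \<Longrightarrow> l2 \<in> L0 \<Longrightarrow> l1 = l2" by blast
        show False
        proof (cases "L0 = {}")
          case True
          hence "(u,v) \<in> r_of \<gamma>" using L0int uv by auto
          thus False using nuv by simp
        next
          case False
          then obtain l where l: "l \<in> L0" by blast
          hence L0l: "L0 = {l}" using one by blast
          have "u \<noteq> v"
          proof
            assume "u = v"
            hence "(u,v) \<in> r_of \<gamma>" using po uv by (simp add: partial_order_on_def preorder_on_def refl_on_def)
            thus False using nuv by simp
          qed
          hence "(u,v) \<in> l \<or> (v,u) \<in> l" using L0lin[OF l] uv by (simp add: linear_order_on_def total_on_def)
          hence "(u,v) \<in> r_of \<gamma> \<or> (v,u) \<in> r_of \<gamma>" using L0int L0l uv by auto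
          thus False using nuv by simp
        qed
      qed
      then obtain l1 l2 where "l1 \<in> L0" "l2 \<in> L0" "l1 \<noteq> l2" by blast
      hence lo: "(card_of {0::nat, 1}, card_of L0) \<in> ordLeq" by (rule two_elems_rev)
      obtain L' where L': "lin_realizer (qclasses A \<gamma>) (r_of \<gamma>) L'" "(card_of L', card_of {0::nat,1}) \<in> ordLeq"
        using R2gen[OF pre, where I="{0::nat,1}" and \<alpha>="\<lambda>_. \<gamma>" and p=0 and q=1] hg by auto
      have "(card_of L0, card_of L') \<in> ordLeq" using L0p L'(1) by blast
      hence "(card_of L0, card_of {0::nat,1}) \<in> ordLeq" using L'(2) by (rule ordLeq_transitive)
      thus "(odim (qclasses A \<gamma>) (r_of \<gamma>), card_of {0::nat, 1}) \<in> ordIso"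
        unfolding od using lo ordIso_iff_ordLeq by blast
    qed
    show "half_space A \<gamma> \<and>
            ((\<not> (\<exists>B\<in>boxes A \<gamma>. empty_box \<gamma> B \<and> (\<exists>x\<in>B. \<exists>y\<in>B. x \<noteq> y)))
               \<longrightarrow> (odim (qclasses A \<gamma>) (r_of \<gamma>), card_of {0::nat}) \<in> ordIso) \<and>
            ((\<exists>B\<in>boxes A \<gamma>. empty_box \<gamma> B \<and> (\<exists>x\<in>B. \<exists>y\<in>B. x \<noteq> y))
               \<longrightarrow> (odim (qclasses A \<gamma>) (r_of \<gamma>), card_of {0::nat, 1}) \<in> ordIso)"
      using hg pa pb by (intro conjI)
  qed
  show ?thesis using part1 part2 by blast
qed


end
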